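(* Let $K\subseteq\mathbb{R}^n$ be any closed convex cone and $c\in\mathbb{R}^n$ an arbitrary vector. Then the set $\{X\in\mathbb{S}^n_+:\ Xc\in K\}$ is rank-one generated.
   Context: $\mathbb{S}^n_+$ is the cone of real symmetric positive semidefinite $n\times n$ matrices. A closed convex cone $\mathcal{S}\subseteq\mathbb{S}^n_+$ is rank-one generated (ROG) if $\mathcal{S}=\mathrm{conv}(\mathcal{S}\cap\{xx^\top:x\in\mathbb{R}^n\})$. *)

theory Defs
  imports "HOL-Analysis.Analysis"
begin

definition psd_cone :: "(real^'n^'n) set" where
  "psd_cone = {X. transpose X = X \<and> (\<forall>x. 0 \<le> x \<bullet> (X *v x))}"

definition outer :: "real^'n \<Rightarrow> real^'n^'n" where
  "outer x = (\<chi> i j. x $ i * x $ j)"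

definition rank_one_generated :: "(real^'n^'n) set \<Rightarrow> bool" where
  "rank_one_generated S \<longleftrightarrow>
     closed S \<and> convex S \<and> cone S \<and> S \<subseteq> psd_cone \<and>
     S = convex hull (S \<inter> {outer x | x. True})"

end

theory Submission
  imports Defs
begin

lemma sym_dot:
  fixes Y :: "real^'n^'n"
  assumes "transpose Y = Y" shows "x \<bullet> (Y *v y) = y \<bullet> (Y *v x)"
proof -
  have e: "Y $ i $ j = Y $ j $ i" for i j
  proof -
    have "transpose Y $ i $ j = Y $ i $ j" using assms by simp
    then show ?thesis by (simp add: transpose_def)
  qed
  have "x \<bullet> (Y *v y) = (\<Sum>i\<in>UNIV. \<Sum>j\<in>UNIV. x $ i * (Y $ i $ j * y $ j))"
    by (simp add: inner_vec_def matrix_vector_mult_def sum_distrib_left)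
  also have "\<dots> = (\<Sum>j\<in>UNIV. \<Sum>i\<in>UNIV. x $ i * (Y $ i $ j * y $ j))"
    by (rule sum.swap)
  also have "\<dots> = (\<Sum>j\<in>UNIV. \<Sum>i\<in>UNIV. y $ j * (Y $ j $ i * x $ i))"
    by (intro sum.cong refl) (simp add: e mult_ac)
  also have "\<dots> = y \<bullet> (Y *v x)"
    by (simp add: inner_vec_def matrix_vector_mult_def sum_distrib_left)
  finally show ?thesis .
qed

lemma outer_mult: "outer u *v x = (u \<bullet> x) *\<^sub>R u"
  by (simp add: outer_def vec_eq_iff matrix_vector_mult_def inner_vec_def sum_distrib_left
      sum_distrib_right mult.commute mult.left_commute)

lemma outer_transpose: "transpose (outer u) = outer u"
  by (simp add: outer_def transpose_def vec_eq_iff mult.commute)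

lemma outer_quad: "x \<bullet> (outer u *v x) = (u \<bullet> x)^2"
  by (simp add: outer_mult power2_eq_square inner_commute)

lemma outer_psd: "outer u \<in> psd_cone"
  by (simp add: psd_cone_def outer_transpose outer_quad)

lemma outer_scale: "0 \<le> t \<Longrightarrow> outer (sqrt t *\<^sub>R u) = t *\<^sub>R outer u"
  by (simp add: outer_def vec_eq_iff real_sqrt_mult[symmetric])

lemma psd_cs:
  assumes "Y \<in> psd_cone"
  shows "(x \<bullet> (Y *v e))^2 \<le> (x \<bullet> (Y *v x)) * (e \<bullet> (Y *v e))"
proof -
  have sym: "transpose Y = Y" and q: "\<And>z. 0 \<le> z \<bullet> (Y *v z)" using assms by (auto simp: psd_cone_def)
  define a where "a = x \<bullet> (Y *v x)"
  define b where "b = x \<bullet> (Y *v e)"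
  define d where "d = e \<bullet> (Y *v e)"
  have exp: "(x + t *\<^sub>R e) \<bullet> (Y *v (x + t *\<^sub>R e)) = a + 2 * t * b + t^2 * d" for t
  proof -
    have "e \<bullet> (Y *v x) = b" using sym_dot[OF sym] b_def by metis
    then show ?thesis
      by (simp add: a_def b_def d_def matrix_vector_right_distrib matrix_vector_mult_scaleR
          inner_add_left inner_add_right algebra_simps power2_eq_square)
  qed
  have nn: "0 \<le> a + 2 * t * b + t^2 * d" for t using q exp by metis
  have "a \<ge> 0" using nn[of 0] by simp
  have "d \<ge> 0" using q d_def by simp
  show ?thesis
  proof (cases "d = 0")
    case True
    then have "0 \<le> a + 2 * t * b" for t using nn[of t] by simp
    have "b = 0"
    proof (rule ccontr)
      assume "b \<noteq> 0"
      have "0 \<le> a + 2 * (-(a+1)/(2*b)) * b" by fact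
      also have "\<dots> = -1" using \<open>b \<noteq> 0\<close> by (simp add: field_simps)
      finally show False by simp
    qed
    then show ?thesis using True by (simp add: a_def b_def d_def)
  next
    case False
    with \<open>d \<ge> 0\<close> have "d > 0" by simp
    have "0 \<le> a + 2 * (-b/d) * b + (-b/d)^2 * d" by (rule nn)
    then have "0 \<le> a * d - b^2" using \<open>d > 0\<close>
      by (simp add: field_simps power2_eq_square)
    then show ?thesis by (simp add: a_def b_def d_def)
  qed
qed

lemma psd_zero:
  assumes "Y \<in> psd_cone" "e \<bullet> (Y *v e) = 0"
  shows "Y *v e = 0"
proof -
  have "((Y *v e) \<bullet> (Y *v e))^2 \<le> 0"
    using psd_cs[OF assms(1), of "Y *v e" e] assms(2) by simp
  then show ?thesis by simp
qed


lemma diag_eq: "Y $ j $ j = axis j 1 \<bullet> (Y *v axis j 1)"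
  by (simp add: matrix_vector_mult_basis inner_axis' column_def)

lemma psd_diff_outer:
  assumes "Y \<in> psd_cone" "0 < e \<bullet> (Y *v e)"
  defines "u \<equiv> (1 / sqrt (e \<bullet> (Y *v e))) *\<^sub>R (Y *v e)"
  shows "Y - outer u \<in> psd_cone" "(Y - outer u) *v e = 0"
    "outer u *v e = Y *v e"
proof -
  define a where "a = e \<bullet> (Y *v e)"
  have a: "a > 0" using assms a_def by simp
  have sym: "transpose Y = Y" using assms by (auto simp: psd_cone_def)
  have ue: "u \<bullet> e = sqrt a"
  proof -
    have "u \<bullet> e = a / sqrt a" using u_def a_def by (simp add: inner_commute)
    also have "\<dots> = sqrt a" using a by (metis real_div_sqrt less_imp_le)
    finally show ?thesis .
  qed
  show oe: "outer u *v e = Y *v e"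
  proof -
    have "outer u *v e = sqrt a *\<^sub>R u" by (simp add: outer_mult ue)
    also have "\<dots> = Y *v e" using a by (simp add: u_def a_def[symmetric])
    finally show ?thesis .
  qed
  show "(Y - outer u) *v e = 0"
    by (simp add: matrix_vector_mult_diff_rdistrib oe)
  have "transpose (Y - outer u) = Y - outer u"
    by (simp add: transpose_def vec_eq_iff outer_transpose[unfolded transpose_def vec_eq_iff, simplified]
        sym[unfolded transpose_def vec_eq_iff, simplified])
  moreover have "0 \<le> x \<bullet> ((Y - outer u) *v x)" for x
  proof -
    have "(u \<bullet> x)^2 = (x \<bullet> (Y *v e))^2 / a"
      using a by (simp add: u_def a_def[symmetric] power_divide power_mult_distrib inner_commute)
    also have "\<dots> \<le> (x \<bullet> (Y *v x)) * a / a"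
      using psd_cs[OF assms(1), of x e] a a_def by (intro divide_right_mono) auto
    also have "\<dots> = x \<bullet> (Y *v x)" using a by simp
    finally show ?thesis
      by (simp add: matrix_vector_mult_diff_rdistrib inner_diff_right outer_quad)
  qed
  ultimately show "Y - outer u \<in> psd_cone" by (simp add: psd_cone_def)
qed


lemma psd_diag_zero:
  assumes "Y \<in> psd_cone" "Y $ j $ j = 0"
  shows "Y $ k $ j = 0" "Y $ j $ k = 0"
proof -
  have "axis j 1 \<bullet> (Y *v axis j 1) = 0" using assms(2) diag_eq[of Y j] by simp
  then have "Y *v axis j 1 = 0" by (rule psd_zero[OF assms(1)])
  then have c: "column j Y = 0" by (simp add: matrix_vector_mult_basis)
  then show "Y $ k $ j = 0" by (simp add: column_def vec_eq_iff)
  have "transpose Y = Y" using assms by (auto simp: psd_cone_def)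
  then have "transpose Y $ j $ k = Y $ j $ k" by simp
  then have "Y $ j $ k = Y $ k $ j" by (simp add: transpose_def)
  with c show "Y $ j $ k = 0" by (simp add: column_def vec_eq_iff)
qed

lemma psd_decomp: "Y \<in> psd_cone \<Longrightarrow> \<exists>vs. Y = sum_list (map outer vs)"
proof (induction "card {j. Y $ j $ j \<noteq> 0}" arbitrary: Y rule: less_induct)
  case less
  show ?case
  proof (cases "\<exists>j. Y $ j $ j \<noteq> 0")
    case False
    then have "\<forall>j k. Y $ k $ j = 0" using psd_diag_zero(1)[OF less.prems] by blast
    then have "Y = 0" by (simp add: vec_eq_iff)
    then show ?thesis by (intro exI[of _ "[]"]) simp
  next
    case True
    then obtain i where i: "Y $ i $ i \<noteq> 0" by blast
    define e :: "real^'a" where "e = axis i 1"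
    have "0 \<le> e \<bullet> (Y *v e)" using less.prems by (simp add: psd_cone_def)
    moreover have "e \<bullet> (Y *v e) \<noteq> 0" using i diag_eq[of Y i] e_def by simp
    ultimately have a: "0 < e \<bullet> (Y *v e)" by simp
    define u where "u = (1 / sqrt (e \<bullet> (Y *v e))) *\<^sub>R (Y *v e)"
    define Z where "Z = Y - outer u"
    have Z1: "Z \<in> psd_cone"
      unfolding Z_def u_def by (rule psd_diff_outer(1)[OF less.prems a])
    have Z2: "Z *v e = 0"
      unfolding Z_def u_def by (rule psd_diff_outer(2)[OF less.prems a])
    note Z = Z1 Z2
    have sub: "{j. Z $ j $ j \<noteq> 0} \<subset> {j. Y $ j $ j \<noteq> 0}"
    proof
      show "{j. Z $ j $ j \<noteq> 0} \<subseteq> {j. Y $ j $ j \<noteq> 0}"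
      proof (safe)
        fix j assume "Z $ j $ j \<noteq> 0" "Y $ j $ j = 0"
        have "Y $ j $ i = 0" using psd_diag_zero[OF less.prems \<open>Y $ j $ j = 0\<close>] by simp
        then have "u $ j = 0"
          by (simp add: u_def e_def matrix_vector_mult_basis column_def)
        then have "Z $ j $ j = 0" using \<open>Y $ j $ j = 0\<close> by (simp add: Z_def outer_def)
        with \<open>Z $ j $ j \<noteq> 0\<close> show False by simp
      qed
      have "Z $ i $ i = 0" using Z(2) diag_eq[of Z i] e_def by simp
      then show "{j. Z $ j $ j \<noteq> 0} \<noteq> {j. Y $ j $ j \<noteq> 0}" using i by blast
    qed
    then have "card {j. Z $ j $ j \<noteq> 0} < card {j. Y $ j $ j \<noteq> 0}"
      by (intro psubset_card_mono) auto
    from less.hyps[OF this Z(1)] obtain vs where "Z = sum_list (map outer vs)" by blast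
    then have "Y = sum_list (map outer (u # vs))" by (simp add: Z_def algebra_simps)
    then show ?thesis by blast
  qed
qed


lemma cont_mv: "continuous_on UNIV (\<lambda>X::real^'n^'n. X *v c)"
proof -
  have "linear (\<lambda>X::real^'n^'n. X *v c)"
    by (intro linearI) (auto simp: vec_eq_iff matrix_vector_mult_def sum.distrib sum_distrib_left distrib_right mult.assoc)
  then show ?thesis by (simp add: linear_continuous_on linear_conv_bounded_linear)
qed

lemma closed_psd: "closed (psd_cone :: (real^'n^'n) set)"
proof -
  have eq: "psd_cone = (\<Inter>x. {X::real^'n^'n. 0 \<le> x \<bullet> (X *v x)}) \<inter> (\<Inter>i. \<Inter>j. {X. X $ i $ j = X $ j $ i})"
    by (auto simp: psd_cone_def transpose_def vec_eq_iff)
  have c1: "continuous_on UNIV (\<lambda>X::real^'n^'n. x \<bullet> (X *v x))" for x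
    by (intro continuous_intros cont_mv)
  have c2: "continuous_on UNIV (\<lambda>X::real^'n^'n. X $ i $ j)" for i j
    by (intro continuous_intros)
  show ?thesis unfolding eq
    by (intro closed_Int closed_INT ballI closed_Collect_le closed_Collect_eq c1 c2 continuous_on_const)
qed

lemma quad_sum: "c \<bullet> (sum_list (map outer vs) *v c) = sum_list (map (\<lambda>v. (v \<bullet> c)^2) vs)"
  by (induction vs) (auto simp: matrix_vector_mult_add_rdistrib inner_add_right outer_quad)


lemma convex_cone_sum_list:
  assumes "convex C" "cone C" "0 \<in> C" "\<forall>w\<in>set ws. f w \<in> C"
  shows "sum_list (map f ws) \<in> C"
  using assms(4)
proof (induction ws)
  case Nil then show ?case using assms(3) by simp
next
  case (Cons w ws)
  then have a: "f w \<in> C" and b: "sum_list (map f ws) \<in> C" by auto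
  define p where "p = sum_list (map f ws)"
  have h: "(1/2) *\<^sub>R f w + (1/2) *\<^sub>R p \<in> C"
    using assms(1) a b unfolding p_def by (intro convexD) auto
  have cr: "\<And>x t. x \<in> C \<Longrightarrow> 0 \<le> t \<Longrightarrow> t *\<^sub>R x \<in> C" using assms(2) unfolding cone_def by blast
  have "(2::real) *\<^sub>R ((1/2) *\<^sub>R f w + (1/2) *\<^sub>R p) \<in> C"
    by (rule cr[OF h]) simp
  moreover have "(2::real) *\<^sub>R ((1/2) *\<^sub>R f w + (1/2) *\<^sub>R p) = f w + p"
    by (simp only: scaleR_right_distrib scaleR_scaleR) simp
  ultimately show ?case by (simp add: p_def)
qed

lemma scale_mv: "((k::real) *\<^sub>R (A::real^'n^'m)) *v v = k *\<^sub>R (A *v v)"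
  by (simp add: vec_eq_iff matrix_vector_mult_def sum_distrib_left mult.assoc)

lemma transpose_add': "transpose (A + B) = transpose A + transpose B"
  by (simp add: transpose_def vec_eq_iff)

lemma psd_lin:
  assumes "X \<in> psd_cone" "Y \<in> psd_cone" "0 \<le> u" "0 \<le> v"
  shows "u *\<^sub>R X + v *\<^sub>R Y \<in> psd_cone"
proof -
  have "transpose (u *\<^sub>R X + v *\<^sub>R Y) = u *\<^sub>R X + v *\<^sub>R Y"
    using assms by (simp add: transpose_add' transpose_scalar psd_cone_def)
  moreover have "0 \<le> x \<bullet> ((u *\<^sub>R X + v *\<^sub>R Y) *v x)" for x
  proof -
    have "x \<bullet> ((u *\<^sub>R X + v *\<^sub>R Y) *v x) = u * (x \<bullet> (X *v x)) + v * (x \<bullet> (Y *v x))"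
      by (simp only: matrix_vector_mult_add_rdistrib scale_mv inner_add_right inner_scaleR_right)
    also have "\<dots> \<ge> 0" using assms by (simp add: psd_cone_def)
    finally show ?thesis .
  qed
  ultimately show ?thesis by (simp add: psd_cone_def)
qed

theorem corollary3p5:
  fixes K :: "(real^'n) set" and c :: "real^'n"
  assumes "closed K" and "convex K" and "cone K"
  shows "rank_one_generated {X \<in> psd_cone. X *v c \<in> K}"
proof -
  define S where "S = {X \<in> psd_cone. X *v c \<in> K}"
  define R where "R = {outer x |x::real^'n. True}"
  have clS: "closed S"
  proof -
    have "closed ((\<lambda>X::real^'n^'n. X *v c) -` K)"
      using cont_mv[of c] by (intro continuous_closed_vimage[OF assms(1)]) (simp add: continuous_on_eq_continuous_at)
    then have "closed (psd_cone \<inter> ((\<lambda>X::real^'n^'n. X *v c) -` K))"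
      using closed_psd by (intro closed_Int) auto
    moreover have "S = psd_cone \<inter> ((\<lambda>X::real^'n^'n. X *v c) -` K)" by (auto simp: S_def)
    ultimately show ?thesis by simp
  qed
  have cvpsd: "convex (psd_cone :: (real^'n^'n) set)"
  proof (rule convexI)
    fix X Y :: "real^'n^'n" and u v :: real
    assume "X \<in> psd_cone" "Y \<in> psd_cone" "0 \<le> u" "0 \<le> v" "u + v = 1"
    then show "u *\<^sub>R X + v *\<^sub>R Y \<in> psd_cone" using psd_lin by blast
  qed
  have cvS: "convex S"
  proof (rule convexI)
    fix X Y :: "real^'n^'n" and u v :: real
    assume "X \<in> S" "Y \<in> S" "0 \<le> u" "0 \<le> v" "u + v = 1"
    then have "u *\<^sub>R X + v *\<^sub>R Y \<in> psd_cone" using psd_lin by (auto simp: S_def)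
    moreover have "(u *\<^sub>R X + v *\<^sub>R Y) *v c = u *\<^sub>R (X *v c) + v *\<^sub>R (Y *v c)"
      by (simp only: matrix_vector_mult_add_rdistrib scale_mv)
    moreover have "u *\<^sub>R (X *v c) + v *\<^sub>R (Y *v c) \<in> K"
      using convexD[OF assms(2)] \<open>X \<in> S\<close> \<open>Y \<in> S\<close> \<open>0 \<le> u\<close> \<open>0 \<le> v\<close> \<open>u + v = 1\<close>
      by (auto simp: S_def)
    ultimately show "u *\<^sub>R X + v *\<^sub>R Y \<in> S" by (simp add: S_def)
  qed
  have coS: "cone S"
    unfolding cone_def
  proof (intro ballI allI impI)
    fix X :: "real^'n^'n" and t :: real
    assume "X \<in> S" "0 \<le> t"
    then have "t *\<^sub>R X + 0 *\<^sub>R X \<in> psd_cone" using psd_lin[of X X t 0] by (auto simp: S_def)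
    moreover have "(t *\<^sub>R X) *v c = t *\<^sub>R (X *v c)" by (rule scale_mv)
    moreover have "t *\<^sub>R (X *v c) \<in> K"
      using assms(3) \<open>X \<in> S\<close> \<open>0 \<le> t\<close> by (auto simp: S_def cone_def)
    ultimately show "t *\<^sub>R X \<in> S" by (simp add: S_def)
  qed
  have coSR: "cone (S \<inter> R)"
    unfolding cone_def
  proof (intro ballI allI impI)
    fix X :: "real^'n^'n" and t :: real
    assume "X \<in> S \<inter> R" "0 \<le> t"
    then obtain x where "X \<in> S" "X = outer x" by (auto simp: R_def)
    then show "t *\<^sub>R X \<in> S \<inter> R"
    proof -
      have cr: "\<And>x t. x \<in> S \<Longrightarrow> 0 \<le> t \<Longrightarrow> t *\<^sub>R x \<in> S" using coS unfolding cone_def by blast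
      have "t *\<^sub>R X \<in> S" using cr \<open>X \<in> S\<close> \<open>0 \<le> t\<close> by blast
      moreover have "t *\<^sub>R X \<in> R" unfolding R_def \<open>X = outer x\<close> outer_scale[OF \<open>0 \<le> t\<close>, of x, symmetric] by blast
      ultimately show ?thesis by blast
    qed
  qed
  have "S \<subseteq> convex hull (S \<inter> R)"
  proof
    fix X assume XS: "X \<in> S"
    then have Xp: "X \<in> psd_cone" and XK: "X *v c \<in> K" by (auto simp: S_def)
    have K0: "0 \<in> K"
    proof -
      have cr: "\<And>x t. x \<in> K \<Longrightarrow> 0 \<le> t \<Longrightarrow> t *\<^sub>R x \<in> K" using assms(3) unfolding cone_def by blast
      have "0 *\<^sub>R (X *v c) \<in> K" by (rule cr) (use XK in simp_all)
      then show ?thesis by simp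
    qed
    obtain u Y where Y: "Y \<in> psd_cone" "Y *v c = 0" "outer u *v c = X *v c" "X = outer u + Y"
    proof (cases "0 < c \<bullet> (X *v c)")
      case True
      define u where "u = (1 / sqrt (c \<bullet> (X *v c))) *\<^sub>R (X *v c)"
      show ?thesis
        using psd_diff_outer[OF Xp True] that[of "X - outer u" u] unfolding u_def by simp
    next
      case False
      have "0 \<le> c \<bullet> (X *v c)" using Xp by (simp add: psd_cone_def)
      with False have "c \<bullet> (X *v c) = 0" by linarith
      then have "X *v c = 0" using psd_zero[OF Xp] by simp
      moreover have "outer 0 = (0::real^'n^'n)" by (simp add: outer_def vec_eq_iff)
      ultimately show ?thesis using that[of X 0] Xp by simp
    qed
    obtain vs where vs: "Y = sum_list (map outer vs)" using psd_decomp[OF Y(1)] by blast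
    have "sum_list (map (\<lambda>v. (v \<bullet> c)^2) vs) = 0" using quad_sum[of c vs] vs Y(2) by simp
    then have vc: "\<forall>v\<in>set vs. v \<bullet> c = 0"
      by (subst (asm) sum_list_nonneg_eq_0_iff) auto
    have mem: "\<forall>w\<in>set (u # vs). outer w \<in> convex hull (S \<inter> R)"
    proof
      fix w assume "w \<in> set (u # vs)"
      then have "outer w *v c \<in> K"
      proof (cases "w = u")
        case True then show ?thesis using Y(3) XK by simp
      next
        case False
        then have "w \<in> set vs" using \<open>w \<in> set (u # vs)\<close> by simp
        then have "w \<bullet> c = 0" using vc by blast
        then show ?thesis using K0 by (simp add: outer_mult)
      qed
      then have "outer w \<in> S \<inter> R" using outer_psd by (auto simp: S_def R_def)
      then show "outer w \<in> convex hull (S \<inter> R)" by (rule hull_inc)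
    qed
    have "outer 0 *v c = (0::real^'n)" by (simp add: outer_mult)
    then have "outer 0 \<in> S \<inter> R" using K0 outer_psd by (auto simp: S_def R_def)
    moreover have "outer 0 = (0::real^'n^'n)" by (simp add: outer_def vec_eq_iff)
    ultimately have "0 \<in> convex hull (S \<inter> R)" using hull_inc[of "outer 0" "S \<inter> R" convex] by simp
    then have "sum_list (map outer (u # vs)) \<in> convex hull (S \<inter> R)"
      using convex_cone_sum_list[OF convex_convex_hull cone_convex_hull[OF coSR] _ mem] by blast
    then show "X \<in> convex hull (S \<inter> R)" using Y(4) vs by simp
  qed
  moreover have "convex hull (S \<inter> R) \<subseteq> S"
    using cvS by (intro hull_minimal) auto
  ultimately have "S = convex hull (S \<inter> R)" by blast
  moreover have "S \<subseteq> psd_cone" by (auto simp: S_def)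
  ultimately show ?thesis
    using clS cvS coS unfolding rank_one_generated_def S_def[symmetric] R_def[symmetric]
    by blast
qed

end
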